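(* Let $A, B \in U(2)$ with $\det(A)\det(B) = 1$, and let $G(A,B)$ be the corresponding parity-preserving two-qubit unitary. Then there exist real numbers $\tau_1,\tau_2,\tau_3,\tau_4,a,b,c$ such that $$G(A,B) = G\bigl(R_z(\tau_1), R_z(\tau_2)\bigr)\, e^{\,i(a\, X\otimes X + b\, Y\otimes Y + c\, Z\otimes Z)}\, G\bigl(R_z(\tau_3), R_z(\tau_4)\bigr).$$
   Context: For $2\times 2$ matrices $A=(A_{ij})$ and $B=(B_{ij})$, $G(A,B)$ denotes the $4\times 4$ matrix, in the computational basis $\{|00\rangle,|01\rangle,|10\rangle,|11\rangle\}$ of two qubits, given by $$G(A,B)=\begin{pmatrix} A_{11}&0&0&A_{12}\\ 0&B_{11}&B_{12}&0\\ 0&B_{21}&B_{22}&0\\ A_{21}&0&0&A_{22}\end{pmatrix},$$ i.e. $A$ acts on the even-parity subspace spanned by $|00\rangle,|11\rangle$ and $B$ on the odd-parity subspace spanned by $|01\rangle,|10\rangle$. A parity-preserving (P.P.) unitary is a unitary of this form (so $A,B$ are unitary). $X,Y,Z$ are the Pauli matrices, and $R_z(\theta)=\mathrm{diag}(e^{i\theta},e^{-i\theta})$. *)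

theory Defs
  imports "Jordan_Normal_Form.Matrix" "Jordan_Normal_Form.Determinant" Complex_Main
begin

definition adj :: "complex mat \<Rightarrow> complex mat" where
  "adj A = mat (dim_col A) (dim_row A) (\<lambda>(i,j). cnj (A $$ (j,i)))"

definition unitary_mat :: "nat \<Rightarrow> complex mat \<Rightarrow> bool" where
  "unitary_mat n U \<longleftrightarrow> U \<in> carrier_mat n n \<and> adj U * U = 1\<^sub>m n \<and> U * adj U = 1\<^sub>m n"

definition kron :: "complex mat \<Rightarrow> complex mat \<Rightarrow> complex mat" where
  "kron A B = mat (dim_row A * dim_row B) (dim_col A * dim_col B)
     (\<lambda>(i,j). A $$ (i div dim_row B, j div dim_col B) * B $$ (i mod dim_row B, j mod dim_col B))"

definition mat_exp :: "complex mat \<Rightarrow> complex mat" where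
  "mat_exp M = mat (dim_row M) (dim_col M)
     (\<lambda>(i,j). \<Sum>k. ((M ^\<^sub>m k) $$ (i,j)) / of_nat (fact k))"

definition pauliX :: "complex mat" where
  "pauliX = mat_of_rows_list 2 [[0, 1], [1, 0]]"
definition pauliY :: "complex mat" where
  "pauliY = mat_of_rows_list 2 [[0, -\<i>], [\<i>, 0]]"
definition pauliZ :: "complex mat" where
  "pauliZ = mat_of_rows_list 2 [[1, 0], [0, -1]]"

definition Rz :: "real \<Rightarrow> complex mat" where
  "Rz \<theta> = mat_of_rows_list 2 [[exp (\<i> * of_real \<theta>), 0], [0, exp (- \<i> * of_real \<theta>)]]"

text \<open>G(A,B): A on span{|00>,|11>} (indices 0,3), B on span{|01>,|10>} (indices 1,2).\<close>
definition G :: "complex mat \<Rightarrow> complex mat \<Rightarrow> complex mat" where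
  "G A B = mat_of_rows_list 4
     [[A $$ (0,0), 0, 0, A $$ (0,1)],
      [0, B $$ (0,0), B $$ (0,1), 0],
      [0, B $$ (1,0), B $$ (1,1), 0],
      [A $$ (1,0), 0, 0, A $$ (1,1)]]"

end

theory Submission imports Defs begin

lemma less4: "(i::nat) < 4 \<longleftrightarrow> i = 0 \<or> i = 1 \<or> i = 2 \<or> i = 3" by auto
lemma less2: "(i::nat) < 2 \<longleftrightarrow> i = 0 \<or> i = 1" by auto

lemma det2: "A \<in> carrier_mat 2 2 \<Longrightarrow> det A = A$$(0,0)*A$$(1,1) - A$$(0,1)*A$$(1,0)"
  apply (subst laplace_expansion_column[of A 2 0])
  apply (auto simp: cofactor_def mat_delete_def numeral_2_eq_2 lessThan_Suc)
  apply (subst (1 2) det_upper_triangular[of _ 1]) apply (auto simp: upper_triangular_def diag_mat_def)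
  done

lemma mat4_eqI: "A \<in> carrier_mat 4 4 \<Longrightarrow> B \<in> carrier_mat 4 4 \<Longrightarrow>
  (\<And>i j. i \<in> {0,1,2,3} \<Longrightarrow> j \<in> {0,1,2,3} \<Longrightarrow> A$$(i,j) = B$$(i,j)) \<Longrightarrow> A = B"
  by (rule eq_matI) (auto simp: less4)

lemma pauli_carrier[simp]: "pauliX \<in> carrier_mat 2 2" "pauliY \<in> carrier_mat 2 2" "pauliZ \<in> carrier_mat 2 2"
  by (auto simp: pauliX_def pauliY_def pauliZ_def mat_of_rows_list_def)
lemma pauli_idx[simp]: "pauliX $$ (0,0) = 0"
  "pauliX $$ (0,Suc 0) = 1"
  "pauliX $$ (Suc 0,0) = 1"
  "pauliX $$ (Suc 0,Suc 0) = 0"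
  "pauliY $$ (0,0) = 0"
  "pauliY $$ (0,Suc 0) = -\<i>"
  "pauliY $$ (Suc 0,0) = \<i>"
  "pauliY $$ (Suc 0,Suc 0) = 0"
  "pauliZ $$ (0,0) = 1"
  "pauliZ $$ (0,Suc 0) = 0"
  "pauliZ $$ (Suc 0,0) = 0"
  "pauliZ $$ (Suc 0,Suc 0) = -1"
  by (auto simp: pauliX_def pauliY_def pauliZ_def mat_of_rows_list_def)
lemma kron_carrier[simp]: "A \<in> carrier_mat 2 2 \<Longrightarrow> B \<in> carrier_mat 2 2 \<Longrightarrow> kron A B \<in> carrier_mat 4 4"
  by (auto simp: kron_def)
lemma kron_dim[simp]: "dim_row (kron A B) = dim_row A * dim_row B" "dim_col (kron A B) = dim_col A * dim_col B"
  by (auto simp: kron_def)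
lemma pauli_dim[simp]: "dim_row pauliX = 2" "dim_col pauliX = 2" "dim_row pauliY = 2" "dim_col pauliY = 2" "dim_row pauliZ = 2" "dim_col pauliZ = 2"
  by (auto simp: pauliX_def pauliY_def pauliZ_def mat_of_rows_list_def)
lemma kron_idx[simp]: "A \<in> carrier_mat 2 2 \<Longrightarrow> B \<in> carrier_mat 2 2 \<Longrightarrow> i < 4 \<Longrightarrow> j < 4 \<Longrightarrow>
   kron A B $$ (i,j) = A$$(i div 2, j div 2) * B$$(i mod 2, j mod 2)"
  by (auto simp: kron_def)
lemma mrl4_carrier[simp]: "mat_of_rows_list 4 [a,b,c,d] \<in> carrier_mat 4 4"
  by (auto simp: mat_of_rows_list_def)
lemma mrl4_idx[simp]: "i < 4 \<Longrightarrow> j < 4 \<Longrightarrow> mat_of_rows_list 4 [a,b,c,d] $$ (i,j) = [a,b,c,d] ! i ! j"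
  by (auto simp: mat_of_rows_list_def)

lemma Mform: "\<i> \<cdot>\<^sub>m (of_real a \<cdot>\<^sub>m kron pauliX pauliX
                          + of_real b \<cdot>\<^sub>m kron pauliY pauliY
                          + of_real c \<cdot>\<^sub>m kron pauliZ pauliZ) =
  mat_of_rows_list 4 [[\<i>*c, 0,0, \<i>*(a-b)],[0, -\<i>*c, \<i>*(a+b), 0],[0, \<i>*(a+b), -\<i>*c, 0],[\<i>*(a-b),0,0,\<i>*c]]"
  apply (rule mat4_eqI)
    apply (auto simp: algebra_simps)
  done

lemma mult4_idx: "A \<in> carrier_mat 4 4 \<Longrightarrow> B \<in> carrier_mat 4 4 \<Longrightarrow> i < 4 \<Longrightarrow> j < 4 \<Longrightarrow>
  (A*B)$$(i,j) = A$$(i,0)*B$$(0,j) + A$$(i,1)*B$$(1,j) + A$$(i,2)*B$$(2,j) + A$$(i,3)*B$$(3,j)"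
  by (auto simp: scalar_prod_def numeral_eq_Suc lessThan_Suc atLeast0_lessThan_Suc algebra_simps)

definition F :: "complex \<Rightarrow> complex \<Rightarrow> complex \<Rightarrow> complex \<Rightarrow> nat \<Rightarrow> complex mat" where
  "F x y u w k = mat_of_rows_list 4 [[(x^k+y^k)/2, 0, 0, (x^k-y^k)/2],[0,(u^k+w^k)/2,(u^k-w^k)/2,0],
     [0,(u^k-w^k)/2,(u^k+w^k)/2,0],[(x^k-y^k)/2,0,0,(x^k+y^k)/2]]"

lemma F_carrier[simp]: "F x y u w k \<in> carrier_mat 4 4" by (simp add: F_def)
lemma F_dim[simp]: "dim_row (F x y u w k) = 4" "dim_col (F x y u w k) = 4" by (simp_all add: F_def mat_of_rows_list_def)

lemma F_pow: "F x y u w 1 ^\<^sub>m k = F x y u w k"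
proof (induction k)
  case 0
  show ?case
    apply simp
    apply (rule mat4_eqI)
    apply (auto simp: F_def)
    done
next
  case (Suc k)
  show ?case
    unfolding pow_mat.simps Suc.IH
    apply (rule mat4_eqI)
      apply (metis mult_carrier_mat F_carrier)
    apply (auto simp: mult4_idx F_def field_simps)
    done
qed

lemma expS: "(\<lambda>k. (x::complex)^k / of_nat (fact k)) sums exp x"
  using exp_converges[of x] by (simp add: scaleR_conv_of_real divide_inverse mult.commute)

lemma es_plus: "(\<Sum>k. ((x^k+y^k)/2) / of_nat (fact k)) = (exp x + exp (y::complex))/2"
proof -
  have h: "(\<lambda>k. (x^k / of_nat (fact k) + y^k / of_nat (fact k))/2) sums ((exp x + exp y)/2)"
    by (intro sums_divide sums_add expS)
  have eq: "(\<lambda>k. ((x^k+y^k)/2) / of_nat (fact k)) = (\<lambda>k. (x^k / of_nat (fact k) + y^k / of_nat (fact k))/2)"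
    by (simp add: fun_eq_iff field_simps)
  show ?thesis unfolding eq using h sums_unique by metis
qed

lemma es_minus: "(\<Sum>k. ((x^k-y^k)/2) / of_nat (fact k)) = (exp x - exp (y::complex))/2"
proof -
  have h: "(\<lambda>k. (x^k / of_nat (fact k) - y^k / of_nat (fact k))/2) sums ((exp x - exp y)/2)"
    by (intro sums_divide sums_diff expS)
  have eq: "(\<lambda>k. ((x^k-y^k)/2) / of_nat (fact k)) = (\<lambda>k. (x^k / of_nat (fact k) - y^k / of_nat (fact k))/2)"
    by (simp add: fun_eq_iff field_simps)
  show ?thesis unfolding eq using h sums_unique by metis
qed

lemma es_plus2: "(\<Sum>k. (x^k+y^k) / (2 * fact k)) = (exp x + exp (y::complex))/2"
  using es_plus[of x y] by (simp add: field_simps)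
lemma es_minus2: "(\<Sum>k. (x^k-y^k) / (2 * fact k)) = (exp x - exp (y::complex))/2"
  using es_minus[of x y] by (simp add: field_simps)

definition E :: "complex \<Rightarrow> complex \<Rightarrow> complex \<Rightarrow> complex \<Rightarrow> complex mat" where
  "E x y u w = mat_of_rows_list 4 [[(exp x+exp y)/2, 0, 0, (exp x-exp y)/2],[0,(exp u+exp w)/2,(exp u-exp w)/2,0],
     [0,(exp u-exp w)/2,(exp u+exp w)/2,0],[(exp x-exp y)/2,0,0,(exp x+exp y)/2]]"

lemma mat_exp_F: "mat_exp (F x y u w 1) = E x y u w"
  unfolding mat_exp_def F_pow
  apply (rule mat4_eqI)
  apply (simp_all add: E_def)
  apply (auto simp: F_def es_plus2 es_minus2)
  done


lemma mult2_idx: "A \<in> carrier_mat 2 2 \<Longrightarrow> B \<in> carrier_mat 2 2 \<Longrightarrow> i < 2 \<Longrightarrow> j < 2 \<Longrightarrow>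
  (A*B)$$(i,j) = A$$(i,0)*B$$(0,j) + A$$(i,1)*B$$(1,j)"
  by (auto simp: scalar_prod_def numeral_eq_Suc lessThan_Suc atLeast0_lessThan_Suc algebra_simps)

lemma adj_idx: "A \<in> carrier_mat 2 2 \<Longrightarrow> i < 2 \<Longrightarrow> j < 2 \<Longrightarrow> adj A $$ (i,j) = cnj (A$$(j,i))"
  by (auto simp: adj_def)
lemma adj_carrier: "A \<in> carrier_mat 2 2 \<Longrightarrow> adj A \<in> carrier_mat 2 2"
  by (auto simp: adj_def)

lemma cp: "(cis(c+p)+cis(c-p))/2 = cis c * of_real (cos p)"
  by (simp add: complex_eq_iff cos_add sin_add cos_diff sin_diff)
lemma cm: "(cis(c+p)-cis(c-p))/2 = cis c * \<i> * of_real (sin p)"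
  by (simp add: complex_eq_iff cos_add sin_add cos_diff sin_diff)

lemma SU:
  fixes A :: "complex mat" and c :: real
  assumes U: "unitary_mat 2 A" and D: "det A = cis (2*c)"
  shows "\<exists>t1 t3 p::real. A$$(0,0) = cis t1 * ((cis(c+p)+cis(c-p))/2) * cis t3
     \<and> A$$(0,1) = cis t1 * ((cis(c+p)-cis(c-p))/2) * cis (-t3)
     \<and> A$$(1,0) = cis (-t1) * ((cis(c+p)-cis(c-p))/2) * cis t3
     \<and> A$$(1,1) = cis (-t1) * ((cis(c+p)+cis(c-p))/2) * cis (-t3)"
proof -
  have Ac: "A \<in> carrier_mat 2 2" and AA: "A * adj A = 1\<^sub>m 2" using U unfolding unitary_mat_def by auto
  define a where "a = A$$(0,0)"
  define b where "b = A$$(0,1)"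
  define c' where "c' = A$$(1,0)"
  define e where "e = A$$(1,1)"
  have "(A * adj A)$$(0,0) = 1" using AA by simp
  hence h1: "a*cnj a + b*cnj b = 1"
    using Ac by (simp add: mult2_idx adj_carrier adj_idx a_def b_def)
  have "(A * adj A)$$(1,0) = 0" using AA by simp
  hence h2: "c'*cnj a + e*cnj b = 0"
    using Ac by (simp add: mult2_idx adj_carrier adj_idx a_def b_def c'_def e_def)
  have dt: "cis (2*c) = a*e - b*c'" using D det2[OF Ac] by (simp add: a_def b_def c'_def e_def)
  have "cis(2*c)*cnj a = e*(a*cnj a + b*cnj b) - b*(c'*cnj a + e*cnj b)"
    unfolding dt by (simp add: algebra_simps)
  hence e_eq: "e = cis(2*c)*cnj a" using h1 h2 by simp
  have "cis(2*c)*cnj b = a*(c'*cnj a + e*cnj b) - c'*(a*cnj a + b*cnj b)"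
    unfolding dt by (simp add: algebra_simps)
  hence c_eq: "c' = - (cis(2*c)*cnj b)" using h1 h2 by simp
  define \<alpha> where "\<alpha> = a * cis (-c)"
  define \<beta> where "\<beta> = b * cis (-c)"
  have ma: "cmod \<alpha> = cmod a" and mb: "cmod \<beta> = cmod b" by (simp_all add: \<alpha>_def \<beta>_def norm_mult)
  have "complex_of_real ((cmod a)^2 + (cmod b)^2) = 1"
    using h1 by (simp only: of_real_add complex_norm_square)
  hence nrm: "(cmod \<alpha>)^2 + (cmod \<beta>)^2 = 1" unfolding ma mb using of_real_eq_1_iff by blast
  define p where "p = arccos (cmod \<alpha>)"
  have sq: "(cmod \<alpha>)^2 \<le> 1" using nrm by (metis le_add_same_cancel1 zero_le_power2)
  have le1: "\<bar>cmod \<alpha>\<bar> \<le> 1" using sq abs_square_le_1 by blast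
  have cosp: "cos p = cmod \<alpha>" unfolding p_def using le1 by (rule cos_arccos_abs)
  have om: "1 - (cmod \<alpha>)^2 = (cmod \<beta>)^2" using nrm by simp
  have sinp: "sin p = cmod \<beta>" unfolding p_def sin_arccos_abs[OF le1] om by simp
  define u where "u = Arg \<alpha>"
  define v where "v = Arg \<beta>"
  have pa: "\<alpha> = of_real (cmod \<alpha>) * cis u" unfolding u_def by (metis rcis_cmod_Arg rcis_def)
  have pb: "\<beta> = of_real (cmod \<beta>) * cis v" unfolding v_def by (metis rcis_cmod_Arg rcis_def)
  define t1 where "t1 = (u + v - pi/2)/2"
  define t3 where "t3 = (u - v + pi/2)/2"
  have a_eq: "a = cis c * \<alpha>" unfolding \<alpha>_def by (simp add: cis_mult)
  have b_eq: "b = cis c * \<beta>" unfolding \<beta>_def by (simp add: cis_mult)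
  have s1: "t1 + t3 = u" unfolding t1_def t3_def by (simp add: field_simps)
  have s2: "t1 - t3 = v - pi/2" unfolding t1_def t3_def by (simp add: field_simps)
  have r1: "cis t1 * ((cis(c+p)+cis(c-p))/2) * cis t3 = A$$(0,0)"
  proof -
    have "cis t1 * ((cis(c+p)+cis(c-p))/2) * cis t3 = cis c * of_real (cos p) * (cis t1 * cis t3)"
      unfolding cp by (simp add: algebra_simps)
    also have "\<dots> = cis c * \<alpha>" unfolding cis_mult s1 cosp by (subst (2) pa) (simp add: algebra_simps)
    finally show ?thesis using a_eq a_def by simp
  qed
  have r2: "cis t1 * ((cis(c+p)-cis(c-p))/2) * cis (-t3) = A$$(0,1)"
  proof -
    have "cis t1 * ((cis(c+p)-cis(c-p))/2) * cis (-t3) = cis c * of_real (sin p) * (\<i> * (cis t1 * cis (-t3)))"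
      unfolding cm by (simp add: algebra_simps)
    also have "\<i> * (cis t1 * cis (-t3)) = cis v"
      unfolding cis_mult using s2 by (simp add: cis_pi_half[symmetric] cis_mult del: cis_pi_half)
    also have "cis c * of_real (sin p) * cis v = cis c * \<beta>" unfolding sinp by (subst (2) pb) (simp add: algebra_simps)
    finally show ?thesis using b_eq b_def by simp
  qed
  have cc: "cis (2*c) * cnj (cis c) = cis c" by (simp add: cis_cnj cis_mult)
  have r3: "cis (-t1) * ((cis(c+p)-cis(c-p))/2) * cis t3 = A$$(1,0)"
  proof -
    have "cis (-t1) * ((cis(c+p)-cis(c-p))/2) * cis t3 = cis c * of_real (sin p) * (\<i> * (cis (-t1) * cis t3))"
      unfolding cm by (simp add: algebra_simps)
    also have "\<i> * (cis (-t1) * cis t3) = - cis (-v)"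
    proof -
      have "\<i> * (cis (-t1) * cis t3) = cis pi * cis (-v)"
        unfolding cis_mult cis_pi_half[symmetric] using s2 by (intro arg_cong[where f=cis]) (simp add: algebra_simps)
      then show ?thesis by simp
    qed
    also have "cis c * of_real (sin p) * (- cis (-v)) = - (cis c * cnj \<beta>)" unfolding sinp
      by (subst (2) pb) (simp add: algebra_simps cis_cnj)
    also have "\<dots> = c'"
    proof -
      have "c' = - (cis (2*c) * cnj (cis c) * cnj \<beta>)" unfolding c_eq b_eq by (simp add: algebra_simps)
      then show ?thesis unfolding cc by simp
    qed
    finally show ?thesis using c'_def by simp
  qed
  have r4: "cis (-t1) * ((cis(c+p)+cis(c-p))/2) * cis (-t3) = A$$(1,1)"
  proof -
    have "cis (-t1) * ((cis(c+p)+cis(c-p))/2) * cis (-t3) = cis c * of_real (cos p) * (cis (-t1) * cis (-t3))"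
      unfolding cp by (simp add: algebra_simps)
    also have "cis (-t1) * cis (-t3) = cis (-u)" unfolding cis_mult using s1 by (intro arg_cong[where f=cis]) (simp add: algebra_simps)
    also have "cis c * of_real (cos p) * cis (-u) = cis c * cnj \<alpha>" unfolding cosp
      by (subst (2) pa) (simp add: algebra_simps cis_cnj)
    also have "\<dots> = e"
    proof -
      have "e = cis (2*c) * cnj (cis c) * cnj \<alpha>" unfolding e_eq a_eq by (simp add: algebra_simps)
      then show ?thesis unfolding cc by simp
    qed
    finally show ?thesis using e_def by simp
  qed
  show ?thesis using r1 r2 r3 r4 by metis
qed

lemma detnorm: assumes U: "unitary_mat 2 A" shows "cmod (det A) = 1"
proof -
  have Ac: "A \<in> carrier_mat 2 2" and AA: "A * adj A = 1\<^sub>m 2" using U unfolding unitary_mat_def by auto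
  define a where "a = A$$(0,0)"
  define b where "b = A$$(0,1)"
  define c' where "c' = A$$(1,0)"
  define e where "e = A$$(1,1)"
  define D where "D = det A"
  have "(A * adj A)$$(0,0) = 1" using AA by simp
  hence h1: "a*cnj a + b*cnj b = 1"
    using Ac by (simp add: mult2_idx adj_carrier adj_idx a_def b_def)
  have "(A * adj A)$$(1,0) = 0" using AA by simp
  hence h2: "c'*cnj a + e*cnj b = 0"
    using Ac by (simp add: mult2_idx adj_carrier adj_idx a_def b_def c'_def e_def)
  have "(A * adj A)$$(1,1) = 1" using AA by simp
  hence h3: "c'*cnj c' + e*cnj e = 1"
    using Ac by (simp add: mult2_idx adj_carrier adj_idx a_def b_def c'_def e_def)
  have dt: "D = a*e - b*c'" using det2[OF Ac] by (simp add: D_def a_def b_def c'_def e_def)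
  have "D*cnj a = e*(a*cnj a + b*cnj b) - b*(c'*cnj a + e*cnj b)"
    unfolding dt by (simp add: algebra_simps)
  hence e_eq: "e = D*cnj a" using h1 h2 by simp
  have "D*cnj b = a*(c'*cnj a + e*cnj b) - c'*(a*cnj a + b*cnj b)"
    unfolding dt by (simp add: algebra_simps)
  hence c_eq: "c' = - (D*cnj b)" using h1 h2 by simp
  have "D * cnj D * (a*cnj a + b*cnj b) = 1" using h3 unfolding e_eq c_eq by (simp add: algebra_simps)
  hence "D * cnj D = 1" using h1 by simp
  hence "complex_of_real ((cmod D)^2) = 1" by (simp only: complex_norm_square)
  hence "(cmod D)^2 = 1" using of_real_eq_1_iff by blast
  thus ?thesis unfolding D_def using norm_ge_zero[of "det A"] by (auto simp: power2_eq_1_iff)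
qed

lemma G_carrier[simp]: "G A B \<in> carrier_mat 4 4" by (simp add: G_def)
lemma G_idx[simp]: "i < 4 \<Longrightarrow> j < 4 \<Longrightarrow> G A B $$ (i,j) = [[A $$ (0,0), 0, 0, A $$ (0,1)],
      [0, B $$ (0,0), B $$ (0,1), 0],
      [0, B $$ (1,0), B $$ (1,1), 0],
      [A $$ (1,0), 0, 0, A $$ (1,1)]] ! i ! j" by (simp add: G_def)
lemma Rz_idx[simp]: "Rz t $$ (0,0) = cis t" "Rz t $$ (0,1) = 0" "Rz t $$ (1,0) = 0" "Rz t $$ (1,1) = cis (-t)"
  by (simp_all add: Rz_def mat_of_rows_list_def cis_conv_exp)
lemma Rz_idx'[simp]: "Rz t $$ (0,Suc 0) = 0" "Rz t $$ (Suc 0,0) = 0" "Rz t $$ (Suc 0,Suc 0) = cis (-t)"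
  by (simp_all add: Rz_def mat_of_rows_list_def cis_conv_exp)
lemma E_carrier[simp]: "E x y u w \<in> carrier_mat 4 4" by (simp add: E_def)

lemma GEG: "G (Rz t1) (Rz t2) * mat_of_rows_list 4 [[e00,0,0,e03],[0,e11,e12,0],[0,e21,e22,0],[e30,0,0,e33]] * G (Rz t3) (Rz t4)
  = mat_of_rows_list 4 [[cis t1*e00*cis t3, 0,0, cis t1*e03*cis(-t3)], [0, cis t2 * e11 * cis t4, cis t2 * e12 * cis(-t4), 0],
    [0, cis(-t2)*e21*cis t4, cis(-t2)*e22*cis(-t4),0],[cis(-t1)*e30*cis t3,0,0,cis(-t1)*e33*cis(-t3)]]"
  (is "?P * ?E * ?Q = _")
proof -
  have PE: "?P * ?E \<in> carrier_mat 4 4" by (metis mult_carrier_mat G_carrier mrl4_carrier)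
  show ?thesis
    apply (rule mat4_eqI)
      apply (metis mult_carrier_mat G_carrier PE)
     apply simp
    apply (auto simp: mult4_idx[OF PE] mult4_idx[OF G_carrier mrl4_carrier] algebra_simps)
    done
qed

theorem lemma1:
  fixes A B :: "complex mat"
  assumes "unitary_mat 2 A" and "unitary_mat 2 B"
    and "det A * det B = 1"
  shows "\<exists>\<tau>1 \<tau>2 \<tau>3 \<tau>4 a b c :: real.
     G A B = G (Rz \<tau>1) (Rz \<tau>2)
       * mat_exp (\<i> \<cdot>\<^sub>m (of_real a \<cdot>\<^sub>m kron pauliX pauliX
                          + of_real b \<cdot>\<^sub>m kron pauliY pauliY
                          + of_real c \<cdot>\<^sub>m kron pauliZ pauliZ))
       * G (Rz \<tau>3) (Rz \<tau>4)"
proof -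
  define D where "D = det A"
  have nD: "cmod D = 1" unfolding D_def using detnorm assms(1) by simp
  define c where "c = Arg D / 2"
  have DA: "det A = cis (2*c)" unfolding c_def D_def[symmetric] using rcis_cmod_Arg[of D] nD
    by (simp add: rcis_def)
  have "D \<noteq> 0" using nD by auto
  have DB: "det B = cis (2*(-c))"
  proof -
    have "det B = 1 / det A" using assms(3) \<open>D \<noteq> 0\<close> unfolding D_def by (simp add: field_simps)
    also have "\<dots> = cis (2*(-c))" unfolding DA by (simp add: divide_inverse)
    finally show ?thesis .
  qed
  obtain t1 t3 p where SA: "A$$(0,0) = cis t1 * ((cis(c+p)+cis(c-p))/2) * cis t3"
     "A$$(0,1) = cis t1 * ((cis(c+p)-cis(c-p))/2) * cis (-t3)"
     "A$$(1,0) = cis (-t1) * ((cis(c+p)-cis(c-p))/2) * cis t3"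
     "A$$(1,1) = cis (-t1) * ((cis(c+p)+cis(c-p))/2) * cis (-t3)"
    using SU[OF assms(1) DA] by blast
  obtain t2 t4 q where SB: "B$$(0,0) = cis t2 * ((cis(-c+q)+cis(-c-q))/2) * cis t4"
     "B$$(0,1) = cis t2 * ((cis(-c+q)-cis(-c-q))/2) * cis (-t4)"
     "B$$(1,0) = cis (-t2) * ((cis(-c+q)-cis(-c-q))/2) * cis t4"
     "B$$(1,1) = cis (-t2) * ((cis(-c+q)+cis(-c-q))/2) * cis (-t4)"
    using SU[OF assms(2) DB] by blast
  define aa where "aa = (p+q)/2"
  define bb where "bb = (q-p)/2"
  define x where "x = \<i> * complex_of_real (c+p)"
  define y where "y = \<i> * complex_of_real (c-p)"
  define u where "u = \<i> * complex_of_real (-c+q)"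
  define w where "w = \<i> * complex_of_real (-c-q)"
  have M: "\<i> \<cdot>\<^sub>m (of_real aa \<cdot>\<^sub>m kron pauliX pauliX
                          + of_real bb \<cdot>\<^sub>m kron pauliY pauliY
                          + of_real c \<cdot>\<^sub>m kron pauliZ pauliZ) = F x y u w 1"
    unfolding Mform F_def x_def y_def u_def w_def aa_def bb_def by (simp add: field_simps)
  have EE: "E x y u w = mat_of_rows_list 4 [[(cis(c+p)+cis(c-p))/2, 0, 0, (cis(c+p)-cis(c-p))/2],
     [0,(cis(-c+q)+cis(-c-q))/2,(cis(-c+q)-cis(-c-q))/2,0],
     [0,(cis(-c+q)-cis(-c-q))/2,(cis(-c+q)+cis(-c-q))/2,0],
     [(cis(c+p)-cis(c-p))/2,0,0,(cis(c+p)+cis(c-p))/2]]"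
    unfolding E_def x_def y_def u_def w_def cis_conv_exp ..
  have "G A B = G (Rz t1) (Rz t2) * E x y u w * G (Rz t3) (Rz t4)"
    unfolding EE GEG unfolding G_def SA SB ..
  then show ?thesis unfolding mat_exp_F[symmetric] M[symmetric] by blast
qed
end
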